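(* Let $a_1,a_2\in\Sigma$ with $a_1\neq a_2$, let $n_1\ge1$, $u\in\{a_1,a_2\}^+$ and $v\in(\Sigma\setminus\{a_1,a_2\})^+$, and let $w=a_1^{n_1}a_2uv$. Then there exists an element of $\mathtt{BR}(w)$ which is not rich.
   Context: $\Sigma$ is an alphabet; $X^+$ denotes the set of nonempty words over a set of letters $X$. For a word $w=w_1\cdots w_n$, $w^R=w_n\cdots w_1$; $w$ is a palindrome if $w=w^R$; a factor of $w$ is a word $u$ with $w=puq$. A word $w$ is rich if the number of distinct nonempty palindromic factors of $w$ equals $|w|$. The block reversal of a nonempty word $w$ is $\mathtt{BR}(w)=\{B_t\cdots B_1 : w=B_1\cdots B_t,\ t\ge1,\ \text{each } B_i \text{ nonempty}\}$. *)

theory Defs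
  imports Main
begin

definition factors :: "'a list \<Rightarrow> 'a list set" where
  "factors w = {u. \<exists>p q. w = p @ u @ q}"

definition is_palindrome :: "'a list \<Rightarrow> bool" where
  "is_palindrome w \<longleftrightarrow> w = rev w"

definition pal_factors :: "'a list \<Rightarrow> 'a list set" where
  "pal_factors w = {u \<in> factors w. u \<noteq> [] \<and> is_palindrome u}"

definition rich :: "'a list \<Rightarrow> bool" where
  "rich w \<longleftrightarrow> card (pal_factors w) = length w"

definition BR :: "'a list \<Rightarrow> 'a list set" where
  "BR w = {concat (rev Bs) | Bs. Bs \<noteq> [] \<and> concat Bs = w \<and> (\<forall>B\<in>set Bs. B \<noteq> [])}"

end

theory Submission
  imports Defs
begin

lemma factors_sub: "factors w \<subseteq> (\<lambda>(i,j). take j (drop i w)) ` ({0..length w} \<times> {0..length w})"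
proof
  fix u assume "u \<in> factors w"
  then obtain p q where pq: "w = p @ u @ q" by (auto simp: factors_def)
  hence e: "u = (\<lambda>(i,j). take j (drop i w)) (length p, length u)" by simp
  have "length p \<le> length w" "length u \<le> length w" using pq by simp_all
  hence "(length p, length u) \<in> {0..length w} \<times> {0..length w}" by simp
  with e show "u \<in> (\<lambda>(i,j). take j (drop i w)) ` ({0..length w} \<times> {0..length w})"
    by (rule image_eqI)
qed

lemma pal_finite: "finite (pal_factors w)"
proof -
  have "finite ((\<lambda>(i,j). take j (drop i w)) ` ({0..length w} \<times> {0..length w}))"
    by (intro finite_imageI finite_cartesian_product) simp_all
  hence "finite (factors w)" by (rule finite_subset[OF factors_sub])
  thus ?thesis unfolding pal_factors_def by auto
qed

lemma fac_inner: "w @ [c] = p @ u @ m \<Longrightarrow> m \<noteq> [] \<Longrightarrow> u \<in> factors w"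
proof -
  assume a: "w @ [c] = p @ u @ m" "m \<noteq> []"
  then obtain m' x where "m = m' @ [x]" by (cases m rule: rev_cases) auto
  with a have "w = p @ u @ m'" by simp
  thus ?thesis by (auto simp: factors_def)
qed

lemma fac_snoc: "u \<in> factors (w@[c]) \<Longrightarrow> u \<notin> factors w \<Longrightarrow> \<exists>p. w@[c] = p@u"
proof -
  assume a: "u \<in> factors (w@[c])" "u \<notin> factors w"
  then obtain p q where pq: "w@[c] = p@u@q" by (auto simp: factors_def)
  show ?thesis
  proof (cases "q = []")
    case True with pq show ?thesis by auto
  next
    case False
    have "u \<in> factors w" by (rule fac_inner[OF pq False])
    with a(2) show ?thesis by contradiction
  qed
qed

lemma pal_iff: "is_palindrome w \<longleftrightarrow> rev w = w"
  unfolding is_palindrome_def by (rule eq_commute)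

lemma uniq_aux:
  assumes "u1 \<in> pal_factors (w@[c]) - pal_factors w" "u2 \<in> pal_factors (w@[c]) - pal_factors w"
    and "length u1 \<le> length u2"
  shows "u1 = u2"
proof -
  have u1: "u1 \<noteq> []" "rev u1 = u1" "u1 \<notin> factors w" "u1 \<in> factors (w@[c])"
    using assms(1) by (auto simp: pal_factors_def pal_iff)
  have u2: "u2 \<noteq> []" "rev u2 = u2" "u2 \<notin> factors w" "u2 \<in> factors (w@[c])"
    using assms(2) by (auto simp: pal_factors_def pal_iff)
  obtain p1 where p1: "w@[c] = p1@u1" using fac_snoc[OF u1(4) u1(3)] by blast
  obtain p2 where p2: "w@[c] = p2@u2" using fac_snoc[OF u2(4) u2(3)] by blast
  have "p1 @ u1 = p2 @ u2" using p1 p2 by simp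
  then obtain m where m: "u2 = m @ u1" using assms(3)
    by (auto simp: append_eq_append_conv2)
  have "rev u2 = rev u1 @ rev m" using m by simp
  hence "u2 = u1 @ rev m" using u1(2) u2(2) by metis
  show ?thesis
  proof (cases "m = []")
    case True thus ?thesis using m by simp
  next
    case False
    have "w@[c] = p2 @ u1 @ rev m" using p2 \<open>u2 = u1 @ rev m\<close> by simp
    hence "u1 \<in> factors w" using fac_inner[of w c p2 u1 "rev m"] False by simp
    thus ?thesis using u1(3) by blast
  qed
qed

lemma card_snoc: "card (pal_factors (w@[c])) \<le> card (pal_factors w) + 1"
proof -
  let ?A = "pal_factors (w@[c])" let ?B = "pal_factors w"
  have "card (?A - ?B) \<le> Suc 0"
    using pal_finite[of "w@[c]"] uniq_aux[of _ w c]
    by (subst card_le_Suc0_iff_eq) (auto, metis nat_le_linear)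
  moreover have "?A \<subseteq> ?B \<union> (?A - ?B)" by auto
  hence "card ?A \<le> card (?B \<union> (?A - ?B))"
    using pal_finite by (intro card_mono) auto
  moreover have "card (?B \<union> (?A - ?B)) \<le> card ?B + card (?A - ?B)" by (rule card_Un_le)
  ultimately show ?thesis by linarith
qed

lemma card_app: "card (pal_factors (y @ z)) \<le> card (pal_factors y) + length z"
proof (induction z rule: rev_induct)
  case Nil thus ?case by simp
next
  case (snoc x xs)
  have "card (pal_factors ((y @ xs) @ [x])) \<le> card (pal_factors (y@xs)) + 1" by (rule card_snoc)
  thus ?case using snoc by simp
qed

lemma pal_nil: "pal_factors [] = {}"
  by (auto simp: pal_factors_def factors_def)

lemma card_le: "card (pal_factors w) \<le> length w"
  using card_app[of "[]" w] by (simp add: pal_nil)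

lemma defect_sub:
  assumes "d \<notin> set v" "d \<notin> set s" "s \<noteq> []" "v \<noteq> []" "set v \<inter> set s = {}"
  shows "pal_factors ((d # v @ s) @ [d]) \<subseteq> pal_factors (d # v @ s)"
proof
  fix u assume uA: "u \<in> pal_factors ((d # v @ s) @ [d])"
  show "u \<in> pal_factors (d # v @ s)"
  proof (rule ccontr)
    assume nB: "u \<notin> pal_factors (d # v @ s)"
    have u: "u \<noteq> []" "rev u = u" "u \<in> factors ((d # v @ s) @ [d])"
      using uA by (auto simp: pal_factors_def pal_iff)
    have nf: "u \<notin> factors (d # v @ s)" using nB u by (auto simp: pal_factors_def pal_iff)
    obtain p where p: "(d # v @ s) @ [d] = p @ u" using fac_snoc[OF u(3) nf] by blast
    have lu: "last u = d" using p u(1) by (metis last_appendR last_snoc)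
    have hu: "hd u = d" using lu u by (metis hd_rev)
    have "[d] \<in> factors (d # v @ s)" unfolding factors_def
      by (rule CollectI, rule exI[of _ "[]"], rule exI[of _ "v@s"]) simp
    hence nd: "u \<noteq> [d]" using nf by auto
    show False
    proof (cases p)
      case Nil
      have U: "u = d # v @ s @ [d]" using p Nil by simp
      have "rev (d # v @ s @ [d]) = d # v @ s @ [d]" using u(2) U by simp
      hence eq: "rev s @ rev v = v @ s" by simp
      have "hd (rev s @ rev v) = hd (v @ s)" by (simp only: eq)
      hence "hd (rev s) = hd v" using assms(3,4) by simp
      hence "hd v \<in> set s" using assms(3) by (metis hd_rev last_in_set)
      moreover have "hd v \<in> set v" using assms(4) by simp
      ultimately show False using assms(5) by auto
    next
      case (Cons x p')
      have "d # (v @ s @ [d]) = x # (p' @ u)" using p Cons by (metis append_Cons append_assoc)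
      hence e: "p' @ u = v @ s @ [d]" by (metis list.inject)
      have "\<exists>us. (p' = v @ us \<and> us @ u = s @ [d]) \<or> (p' @ us = v \<and> u = us @ s @ [d])"
        using e by (simp only: append_eq_append_conv2)
      then obtain us where
        "(p' = v @ us \<and> us @ u = s @ [d]) \<or> (p' @ us = v \<and> u = us @ s @ [d])" by (elim exE)
      thus False
      proof
        assume h: "p' = v @ us \<and> us @ u = s @ [d]"
        hence "us @ u = s @ [d]" by simp
        hence "\<exists>zs. (us = s @ zs \<and> zs @ u = [d]) \<or> (us @ zs = s \<and> u = zs @ [d])"
          by (simp only: append_eq_append_conv2)
        then obtain zs where
          "(us = s @ zs \<and> zs @ u = [d]) \<or> (us @ zs = s \<and> u = zs @ [d])" by (elim exE)
        thus False
        proof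
          assume "us = s @ zs \<and> zs @ u = [d]"
          hence "zs @ u = [d]" by simp
          hence "u = [d]" using u(1) by (cases zs) auto
          thus False using nd by simp
        next
          assume h2: "us @ zs = s \<and> u = zs @ [d]"
          show False
          proof (cases zs)
            case Nil thus False using h2 nd by simp
          next
            case (Cons z zs')
            hence "hd u = z" using h2 by simp
            moreover have "z \<in> set s" using h2 Cons by auto
            ultimately show False using hu assms(2) by metis
          qed
        qed
      next
        assume h: "p' @ us = v \<and> u = us @ s @ [d]"
        show False
        proof (cases us)
          case Nil
          hence "u = s @ [d]" using h by simp
          hence "hd u = hd s" using assms(3) by simp
          moreover have "hd s \<in> set s" using assms(3) by simp
          ultimately show False using hu assms(2) by metis
        next
          case (Cons y ys)
          hence "hd u = y" using h by simp
          moreover have "y \<in> set v" using h Cons by auto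
          ultimately show False using hu assms(1) by metis
        qed
      qed
    qed
  qed
qed

lemma defect:
  assumes "d \<notin> set v" "d \<notin> set s" "s \<noteq> []" "v \<noteq> []" "set v \<inter> set s = {}"
  shows "\<not> rich (d # v @ s @ [d] @ r)"
proof -
  let ?y = "d # v @ s"
  have "card (pal_factors ((?y @ [d]) @ r)) \<le> card (pal_factors (?y @ [d])) + length r" by (rule card_app)
  moreover have "card (pal_factors (?y @ [d])) \<le> card (pal_factors ?y)"
    using defect_sub[OF assms] pal_finite by (intro card_mono) auto
  moreover have "card (pal_factors ?y) \<le> length ?y" by (rule card_le)
  ultimately have "card (pal_factors ((?y @ [d]) @ r)) < length ((?y @ [d]) @ r)" by simp
  thus ?thesis unfolding rich_def by simp
qed

lemma BR_intro: "Bs \<noteq> [] \<Longrightarrow> concat Bs = w \<Longrightarrow> (\<forall>B\<in>set Bs. B \<noteq> []) \<Longrightarrow> concat (rev Bs) \<in> BR w"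
  unfolding BR_def by blast

theorem mainTheorem4:
  fixes a1 a2 :: 'a and n1 :: nat and u v :: "'a list"
  assumes "a1 \<noteq> a2"
    and "n1 \<ge> 1"
    and "u \<noteq> []" and "set u \<subseteq> {a1, a2}"
    and "v \<noteq> []" and "set v \<inter> {a1, a2} = {}"
  shows "\<exists>x \<in> BR (replicate n1 a1 @ [a2] @ u @ v). \<not> rich x"
proof -
  obtain u' d where ud: "u = u' @ [d]" using assms(3) by (cases u rule: rev_cases) auto
  have "d \<in> {a1, a2}" using ud assms(4) by auto
  moreover have "set u' \<subseteq> {a1,a2}" using ud assms(4) by auto
  moreover have rn: "replicate n1 a1 \<noteq> []" using assms(2) by simp
  ultimately consider "d = a2" | "d = a1" by auto
  thus ?thesis
  proof cases
    case 1
    let ?Bs = "[replicate n1 a1 @ [a2] @ u', a2 # v]"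
    have "concat (rev ?Bs) \<in> BR (replicate n1 a1 @ [a2] @ u @ v)"
      using ud 1 by (intro BR_intro) auto
    moreover have "\<not> rich (a2 # v @ replicate n1 a1 @ [a2] @ u')"
      using assms rn by (intro defect) auto
    ultimately show ?thesis by (intro bexI) auto
  next
    case 2
    let ?Bs = "[replicate n1 a1, a2 # u', a1 # v]"
    let ?t = "a2 # u' @ replicate n1 a1"
    let ?s = "takeWhile (\<lambda>x. x \<noteq> a1) ?t"
    let ?r = "dropWhile (\<lambda>x. x \<noteq> a1) ?t"
    have "concat (rev ?Bs) \<in> BR (replicate n1 a1 @ [a2] @ u @ v)"
      using ud 2 rn by (intro BR_intro) auto
    moreover have tsr: "?t = ?s @ ?r" by simp
    have "a1 \<in> set ?t" using rn by auto
    hence "?r \<noteq> []" unfolding dropWhile_eq_Nil_conv by blast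
    moreover have "hd ?r = a1" using \<open>a1 \<in> set ?t\<close> by (metis (mono_tags) hd_dropWhile \<open>?r \<noteq> []\<close>)
    ultimately obtain r' where rr: "?r = a1 # r'" by (cases ?r) auto
    have s_ne: "?s \<noteq> []" using assms(1) by simp
    have "set ?t \<subseteq> {a1, a2}" using \<open>set u' \<subseteq> {a1,a2}\<close> by auto
    moreover have "set ?s \<subseteq> set ?t" by (auto dest: set_takeWhileD)
    ultimately have s_sub: "set ?s \<subseteq> {a1, a2}" by blast
    have s_no: "a1 \<notin> set ?s" by (metis (mono_tags) set_takeWhileD)
    have "\<not> rich (a1 # v @ ?s @ [a1] @ r')"
      using assms s_ne s_sub s_no by (intro defect) auto
    moreover have "concat (rev ?Bs) = a1 # v @ ?s @ [a1] @ r'"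
      using tsr rr by (simp del: takeWhile.simps dropWhile.simps)
    ultimately show ?thesis using \<open>concat (rev ?Bs) \<in> _\<close> by (intro bexI) auto
  qed
qed

end
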